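(* Let $\mathcal{V}$ be a non-trivial quantale, $\mathsf{F}\colon\mathbf{Set}\to\mathbf{Set}$ a functor and $\lambda$ a $\kappa$-ary $\mathcal{V}$-valued predicate lifting for $\mathsf{F}$. The Kantorovich lifting $\mathsf{F}^\lambda$ of $\mathsf{F}$ with respect to $\{\lambda\}$ sends a $\mathcal{V}$-category $(X,a)$ to $(\mathsf{F}X,\mathsf{F}^\lambda a)$ where $\mathsf{F}^\lambda a=\bigwedge_{r\colon(\kappa,1_\kappa)\nrightarrow(X,a)\text{ distributor}}\lambda(r)\multimap\lambda(r)$.
   Context: A quantale $(\mathcal{V},\otimes,k)$ is a complete lattice with commutative monoid structure, each $u\otimes-$ preserving joins, $\hom(u,-)$ its right adjoint; non-trivial: $\bot\ne\top$. $\mathcal{V}$-categories $(X,a)$: $k\le a(x,x)$, $a(x,y)\otimes a(y,z)\le a(x,z)$; $\mathcal{V}$-functors: $a(x,y)\le b(fx,fy)$. $\mathcal{V}$-relations $r\colon X\nrightarrow Y$ are maps $X\times Y\to\mathcal{V}$, composed by $(s\cdot r)(x,z)=\bigvee_y r(x,y)\otimes s(y,z)$; $1_\kappa$ is $k$ on the diagonal and $\bot$ elsewhere. For $r\colon X\nrightarrow Y$, $s\colon X\nrightarrow Z$, $(r\multimap s)(z,y)=\bigwedge_x\hom(s(x,z),r(x,y))$. A distributor $r\colon(\kappa,1_\kappa)\nrightarrow(X,a)$ is a $\mathcal{V}$-relation $r\colon\kappa\nrightarrow X$ with $a\cdot r\le r$. A $\kappa$-ary $\mathcal{V}$-valued predicate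 lifting is a natural transformation $\lambda\colon\mathbf{Set}(-,\mathcal{V}^\kappa)\to\mathbf{Set}(\mathsf{F}-,\mathcal{V})$; identifying $f\colon X\to\mathcal{V}^\kappa$ with the relation $\kappa\nrightarrow X$, $(i,x)\mapsto f(x)(i)$, and maps $\mathsf{F}X\to\mathcal{V}$ with relations $1\nrightarrow\mathsf{F}X$, $\lambda$ maps relations $\kappa\nrightarrow X$ to relations $1\nrightarrow\mathsf{F}X$. The Kantorovich lifting $\mathsf{F}^\lambda$ sends $(X,a)$ to $\mathsf{F}X$ with structure $c(\mathfrak{x},\mathfrak{y})=\bigwedge_f\hom(\lambda_X(f)(\mathfrak{x}),\lambda_X(f)(\mathfrak{y}))$, over all $\mathcal{V}$-functors $f\colon(X,a)\to\mathcal{V}^\kappa$, where $\mathcal{V}^\kappa$ has $[f,g]=\bigwedge_i\hom(f(i),g(i))$. *)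

theory Defs
  imports Main "HOL-Library.FuncSet"
begin

definition quantale :: "('v::complete_lattice \<Rightarrow> 'v \<Rightarrow> 'v) \<Rightarrow> 'v \<Rightarrow> bool" where
  "quantale tn k \<longleftrightarrow>
     (\<forall>u v w. tn (tn u v) w = tn u (tn v w)) \<and>
     (\<forall>u v. tn u v = tn v u) \<and>
     (\<forall>u. tn k u = u) \<and>
     (\<forall>u S. tn u (Sup S) = Sup (tn u ` S))"

definition qhom :: "('v::complete_lattice \<Rightarrow> 'v \<Rightarrow> 'v) \<Rightarrow> 'v \<Rightarrow> 'v \<Rightarrow> 'v" where
  "qhom tn u v = Sup {w. tn u w \<le> v}"

definition vcat :: "('v::complete_lattice \<Rightarrow> 'v \<Rightarrow> 'v) \<Rightarrow> 'v \<Rightarrow> 'x set \<Rightarrow> ('x \<Rightarrow> 'x \<Rightarrow> 'v) \<Rightarrow> bool" where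
  "vcat tn k X a \<longleftrightarrow>
     (\<forall>x\<in>X. k \<le> a x x) \<and>
     (\<forall>x\<in>X. \<forall>y\<in>X. \<forall>z\<in>X. tn (a x y) (a y z) \<le> a x z)"

definition powstruct :: "('v::complete_lattice \<Rightarrow> 'v \<Rightarrow> 'v) \<Rightarrow> 'k set \<Rightarrow> ('k \<Rightarrow> 'v) \<Rightarrow> ('k \<Rightarrow> 'v) \<Rightarrow> 'v" where
  "powstruct tn K f g = Inf {qhom tn (f i) (g i) | i. i \<in> K}"

definition vfunctor_pow :: "('v::complete_lattice \<Rightarrow> 'v \<Rightarrow> 'v) \<Rightarrow> 'x set \<Rightarrow> ('x \<Rightarrow> 'x \<Rightarrow> 'v) \<Rightarrow> 'k set
     \<Rightarrow> ('x \<Rightarrow> 'k \<Rightarrow> 'v) \<Rightarrow> bool" where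
  "vfunctor_pow tn X a K f \<longleftrightarrow>
     f \<in> X \<rightarrow>\<^sub>E (K \<rightarrow>\<^sub>E UNIV) \<and> (\<forall>x\<in>X. \<forall>y\<in>X. a x y \<le> powstruct tn K (f x) (f y))"

definition vrel :: "'a set \<Rightarrow> 'b set \<Rightarrow> ('a \<Rightarrow> 'b \<Rightarrow> 'v) \<Rightarrow> bool" where
  "vrel A B r \<longleftrightarrow> (\<forall>x y. (x \<notin> A \<or> y \<notin> B) \<longrightarrow> r x y = undefined)"

definition rcomp :: "('v::complete_lattice \<Rightarrow> 'v \<Rightarrow> 'v) \<Rightarrow> 'b set \<Rightarrow> ('b \<Rightarrow> 'c \<Rightarrow> 'v) \<Rightarrow> ('a \<Rightarrow> 'b \<Rightarrow> 'v) \<Rightarrow> 'a \<Rightarrow> 'c \<Rightarrow> 'v" where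
  "rcomp tn B s r x z = Sup {tn (r x y) (s y z) | y. y \<in> B}"

definition rimp :: "('v::complete_lattice \<Rightarrow> 'v \<Rightarrow> 'v) \<Rightarrow> 'a set \<Rightarrow> ('a \<Rightarrow> 'b \<Rightarrow> 'v) \<Rightarrow> ('a \<Rightarrow> 'c \<Rightarrow> 'v) \<Rightarrow> 'c \<Rightarrow> 'b \<Rightarrow> 'v" where
  "rimp tn A r s z y = Inf {qhom tn (s x z) (r x y) | x. x \<in> A}"

text \<open>A distributor (K, 1_K) -/-> (X, a): a V-relation r : K -/-> X with a . r <= r.\<close>
definition distributor :: "('v::complete_lattice \<Rightarrow> 'v \<Rightarrow> 'v) \<Rightarrow> 'k set \<Rightarrow> 'x set \<Rightarrow> ('x \<Rightarrow> 'x \<Rightarrow> 'v)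
     \<Rightarrow> ('k \<Rightarrow> 'x \<Rightarrow> 'v) \<Rightarrow> bool" where
  "distributor tn K X a r \<longleftrightarrow> vrel K X r \<and> (\<forall>i\<in>K. \<forall>y\<in>X. rcomp tn X a r i y \<le> r i y)"

text \<open>We model Set by the category of all subsets of a universe type 'u with
  (extensional) maps; a functor assigns to each A :: 'u set a set Fobj A :: 'w set and
  to each map g : A -> B a map Fmap A B g : Fobj A -> Fobj B.\<close>
definition set_functor :: "('u set \<Rightarrow> 'w set) \<Rightarrow> ('u set \<Rightarrow> 'u set \<Rightarrow> ('u \<Rightarrow> 'u) \<Rightarrow> 'w \<Rightarrow> 'w) \<Rightarrow> bool" where
  "set_functor Fobj Fmap \<longleftrightarrow>
     (\<forall>A B g. g \<in> A \<rightarrow>\<^sub>E B \<longrightarrow> Fmap A B g \<in> Fobj A \<rightarrow>\<^sub>E Fobj B) \<and>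
     (\<forall>A. Fmap A A (restrict id A) = restrict id (Fobj A)) \<and>
     (\<forall>A B C g h. g \<in> A \<rightarrow>\<^sub>E B \<longrightarrow> h \<in> B \<rightarrow>\<^sub>E C \<longrightarrow>
        Fmap A C (compose A h g) = compose (Fobj A) (Fmap B C h) (Fmap A B g))"

definition pred_lifting :: "('u set \<Rightarrow> 'w set) \<Rightarrow> ('u set \<Rightarrow> 'u set \<Rightarrow> ('u \<Rightarrow> 'u) \<Rightarrow> 'w \<Rightarrow> 'w) \<Rightarrow> 'k set
     \<Rightarrow> ('u set \<Rightarrow> ('u \<Rightarrow> 'k \<Rightarrow> 'v) \<Rightarrow> 'w \<Rightarrow> 'v) \<Rightarrow> bool" where
  "pred_lifting Fobj Fmap K lam \<longleftrightarrow>
     (\<forall>A f. f \<in> A \<rightarrow>\<^sub>E (K \<rightarrow>\<^sub>E UNIV) \<longrightarrow> lam A f \<in> Fobj A \<rightarrow>\<^sub>E UNIV) \<and>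
     (\<forall>A B g f. g \<in> A \<rightarrow>\<^sub>E B \<longrightarrow> f \<in> B \<rightarrow>\<^sub>E (K \<rightarrow>\<^sub>E UNIV) \<longrightarrow>
        lam A (compose A f g) = compose (Fobj A) (lam B f) (Fmap A B g))"

definition rel_to_map :: "'k set \<Rightarrow> 'x set \<Rightarrow> ('k \<Rightarrow> 'x \<Rightarrow> 'v) \<Rightarrow> 'x \<Rightarrow> 'k \<Rightarrow> 'v" where
  "rel_to_map K X r = (\<lambda>x\<in>X. \<lambda>i\<in>K. r i x)"

text \<open>lam applied to a relation r : K -/-> X, giving a relation 1 -/-> F X.\<close>
definition lam_rel :: "('u set \<Rightarrow> ('u \<Rightarrow> 'k \<Rightarrow> 'v) \<Rightarrow> 'w \<Rightarrow> 'v) \<Rightarrow> 'k set \<Rightarrow> 'u set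
     \<Rightarrow> ('k \<Rightarrow> 'u \<Rightarrow> 'v) \<Rightarrow> unit \<Rightarrow> 'w \<Rightarrow> 'v" where
  "lam_rel lam K X r = (\<lambda>_ w. lam X (rel_to_map K X r) w)"

definition kantorovich :: "('v::complete_lattice \<Rightarrow> 'v \<Rightarrow> 'v) \<Rightarrow> 'k set
     \<Rightarrow> ('u set \<Rightarrow> ('u \<Rightarrow> 'k \<Rightarrow> 'v) \<Rightarrow> 'w \<Rightarrow> 'v) \<Rightarrow> 'u set \<Rightarrow> ('u \<Rightarrow> 'u \<Rightarrow> 'v) \<Rightarrow> 'w \<Rightarrow> 'w \<Rightarrow> 'v" where
  "kantorovich tn K lam X a p q =
     Inf {qhom tn (lam X f p) (lam X f q) | f. vfunctor_pow tn X a K f}"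

end

theory Submission
  imports Defs
begin

lemma q_mono:
  assumes "quantale tn k" "x \<le> y"
  shows "tn u x \<le> tn u (y::'v::complete_lattice)"
proof -
  have "tn u (Sup {x, y}) = Sup (tn u ` {x, y})" using assms(1) unfolding quantale_def by blast
  moreover have "Sup {x, y} = y" using assms(2) by (simp add: sup_absorb2)
  ultimately show ?thesis by (metis Sup_upper image_insert insertI1)
qed

lemma q_eval:
  assumes "quantale tn k"
  shows "tn u (qhom tn u v) \<le> (v::'v::complete_lattice)"
proof -
  have "tn u (qhom tn u v) = Sup (tn u ` {w. tn u w \<le> v})"
    using assms unfolding quantale_def qhom_def by blast
  also have "\<dots> \<le> v" by (auto intro: Sup_least)
  finally show ?thesis .
qed

lemma q_adj:
  assumes "tn u w \<le> v"
  shows "w \<le> qhom tn u (v::'v::complete_lattice)"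
  unfolding qhom_def using assms by (auto intro: Sup_upper)

theorem proposition5:
  fixes tn :: "'v::complete_lattice \<Rightarrow> 'v \<Rightarrow> 'v" and k :: 'v
    and Fobj :: "'u set \<Rightarrow> 'w set" and Fmap :: "'u set \<Rightarrow> 'u set \<Rightarrow> ('u \<Rightarrow> 'u) \<Rightarrow> 'w \<Rightarrow> 'w"
    and K :: "'k set" and lam :: "'u set \<Rightarrow> ('u \<Rightarrow> 'k \<Rightarrow> 'v) \<Rightarrow> 'w \<Rightarrow> 'v"
    and X :: "'u set" and a :: "'u \<Rightarrow> 'u \<Rightarrow> 'v"
  assumes "quantale tn k" and "(bot::'v) \<noteq> top"
    and "set_functor Fobj Fmap" and "pred_lifting Fobj Fmap K lam"
    and "vcat tn k X a"
  shows "\<forall>p\<in>Fobj X. \<forall>q\<in>Fobj X.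
           kantorovich tn K lam X a p q =
           Inf {rimp tn (UNIV::unit set) (lam_rel lam K X r) (lam_rel lam K X r) p q
                | r. distributor tn K X a r}"
proof (intro ballI)
  fix p q
  have Q: "quantale tn k" by fact
  have rimp_eq: "rimp tn (UNIV::unit set) (lam_rel lam K X r) (lam_rel lam K X r) p q
      = qhom tn (lam X (rel_to_map K X r) p) (lam X (rel_to_map K X r) q)" for r
    unfolding rimp_def lam_rel_def by simp
  have A: "vfunctor_pow tn X a K f \<Longrightarrow> \<exists>r. distributor tn K X a r \<and> f = rel_to_map K X r" for f
  proof -
    assume vf: "vfunctor_pow tn X a K f"
    define r where "r i x = (if i \<in> K \<and> x \<in> X then f x i else undefined)" for i x
    have fe: "f \<in> X \<rightarrow>\<^sub>E (K \<rightarrow>\<^sub>E UNIV)" using vf unfolding vfunctor_pow_def by blast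
    have "f = rel_to_map K X r"
    proof (rule ext)+
      fix x i
      show "f x i = rel_to_map K X r x i"
        using fe unfolding rel_to_map_def r_def
        by (cases "x \<in> X"; cases "i \<in> K") (auto simp: PiE_def extensional_def)
    qed
    moreover have "distributor tn K X a r"
      unfolding distributor_def
    proof (intro conjI ballI)
      show "vrel K X r" unfolding vrel_def r_def by auto
      fix i y assume i: "i \<in> K" and y: "y \<in> X"
      show "rcomp tn X a r i y \<le> r i y"
        unfolding rcomp_def
      proof (rule Sup_least, clarify)
        fix x assume x: "x \<in> X"
        have "a x y \<le> powstruct tn K (f x) (f y)" using vf x y unfolding vfunctor_pow_def by blast
        also have "\<dots> \<le> qhom tn (f x i) (f y i)" unfolding powstruct_def using i by (auto intro: Inf_lower)
        finally have "tn (f x i) (a x y) \<le> tn (f x i) (qhom tn (f x i) (f y i))" by (rule q_mono[OF Q])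
        also have "\<dots> \<le> f y i" by (rule q_eval[OF Q])
        finally show "tn (r i x) (a x y) \<le> r i y" using i x y unfolding r_def by simp
      qed
    qed
    ultimately show ?thesis by blast
  qed
  have B: "distributor tn K X a r \<Longrightarrow> vfunctor_pow tn X a K (rel_to_map K X r)" for r
  proof -
    assume d: "distributor tn K X a r"
    show ?thesis unfolding vfunctor_pow_def
    proof (intro conjI ballI)
      show "rel_to_map K X r \<in> X \<rightarrow>\<^sub>E (K \<rightarrow>\<^sub>E UNIV)" unfolding rel_to_map_def by auto
      fix x y assume x: "x \<in> X" and y: "y \<in> X"
      show "a x y \<le> powstruct tn K (rel_to_map K X r x) (rel_to_map K X r y)"
        unfolding powstruct_def
      proof (rule Inf_greatest, clarify)
        fix i assume i: "i \<in> K"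
        have "tn (r i x) (a x y) \<le> rcomp tn X a r i y"
          unfolding rcomp_def using x by (auto intro: Sup_upper)
        also have "\<dots> \<le> r i y" using d i y unfolding distributor_def by blast
        finally have "a x y \<le> qhom tn (r i x) (r i y)" by (rule q_adj)
        then show "a x y \<le> qhom tn (rel_to_map K X r x i) (rel_to_map K X r y i)"
          using x y i unfolding rel_to_map_def by simp
      qed
    qed
  qed
  have "{qhom tn (lam X f p) (lam X f q) | f. vfunctor_pow tn X a K f}
      = {rimp tn (UNIV::unit set) (lam_rel lam K X r) (lam_rel lam K X r) p q | r. distributor tn K X a r}"
    unfolding rimp_eq using A B by blast
  then show "kantorovich tn K lam X a p q =
           Inf {rimp tn (UNIV::unit set) (lam_rel lam K X r) (lam_rel lam K X r) p q
                | r. distributor tn K X a r}"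
    unfolding kantorovich_def by simp
qed

end
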